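(* Consider the $d$-level Nested Logit model and the experiment design $\mathcal{S}$ described in the context, and suppose the $d$-level general position assumption (described in the context) holds. Let $S \in \mathcal{S}$ and $i,j \in S$. Then: (I) if $j$ is a child of $N^{\mathrm{par}}(i)$, then $\mathsf{BF}(i,S) = \mathsf{BF}(j,S)$; (II) if $j$ is not a child of $N^{\mathrm{par}}(i)$ and there exists a child $k$ of $N^{\mathrm{par}}(i)$ with $k \notin S$, then $\mathsf{BF}(i,S) \neq \mathsf{BF}(j,S)$.
   Context: Items: $[n]=\{1,\dots,n\}$, $n \ge 2$. Experiment design: fix an integer base $b \ge 2$, let $L = \lceil \log_b n \rceil$, fix an injective map $\sigma: [n] \to \{0,\dots,b-1\}^L$ with coordinates $\sigma_\ell(i)$, let $S_{\ell,-d} = \{i \in [n] : \sigma_\ell(i) \neq d\}$ for $\ell \in \{1,\dots,L\}$, $d \in \{0,\dots,b-1\}$, and $\mathcal{S} = \{S_{\ell,-d}\}_{\ell,d}$; the control assortment $[n]$ is also offered. $d$-level Nested Logit model: the items are the leaves of a rooted tree $\mathcal{T}$ of depth $d \ge 1$ in which every leaf is at depth $d$; internal nodes are called nests. For each item $i$, $r = a_0(i) \to a_1(i) \to \cdots \to a_d(i) = i$ is the root-to-leaf path, and $N^{\mathrm{par}}(i) = a_{d-1}(i)$ is the parent of $i$. For a node $N$, $\mathrm{Ch}(N)$ is its set of children and $\mathrm{Leaf}(N)$ the set of leaves in its subtree; for an assortment $S$ we write $N \cap S$ for $\mathrm{Leaf}(N) \cap S$. Each item has a weight $v_i > 0$ and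 each internal node $N$ a parameter $\lambda_N \in (0,1]$. For $S \subseteq [n]$: $v_i(S) = v_i$ if $i \in S$ and $0$ otherwise; for internal $N$, $v_N(S) = (\sum_{K \in \mathrm{Ch}(N)} v_K(S))^{\lambda_N}$; for $K \in \mathrm{Ch}(N)$, $P(K \mid N, S) = v_K(S)/\sum_{L' \in \mathrm{Ch}(N)} v_{L'}(S)$; and $\phi(i,S) = \prod_{h=0}^{d-1} P(a_{h+1}(i) \mid a_h(i), S)$ for $i \in S$. For a node $N$, $P(N \mid S) = \sum_{i \in \mathrm{Leaf}(N) \cap S} \phi(i,S)$. Boost factor: $\mathsf{BF}(i,S) = \phi(i,S)/\phi(i,[n])$. $d$-level general position assumption: for every $S \in \mathcal{S}$ and any two distinct internal nodes $N \neq N'$ with $N \cap S \neq \emptyset$ and $N' \cap S \neq \emptyset$, and such that $N \cap S \subsetneq \mathrm{Leaf}(N)$ or $N' \cap S \subsetneq \mathrm{Leaf}(N')$, we have $\frac{P(N \mid S)}{P(N \mid [n])} \cdot \frac{\sum_{K \in \mathrm{Ch}(N)} v_K([n])}{\sum_{K \in \mathrm{Ch}(N)} v_K(S)} \neq \frac{P(N' \mid S)}{P(N' \mid [n])} \cdot \frac{\sum_{K \in \mathrm{Ch}(N')} v_K([n])}{\sum_{K \in \mathrm{Ch}(N')} v_K(S)}$. *)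

theory Defs
  imports Complex_Main
begin

text \<open>The tree of depth d is encoded by an ancestor map:
  anc h i is the label of a_h(i), the depth-h ancestor of item i (0 <= h <= d);
  a node of the tree is a pair (h, x) with x = anc h i for some item i.
  The root is the unique depth-0 node, and a_d(i) = i (leaves are the items).\<close>

definition nl_tree :: "nat \<Rightarrow> nat \<Rightarrow> (nat \<Rightarrow> nat \<Rightarrow> nat) \<Rightarrow> bool" where
  "nl_tree n d anc \<longleftrightarrow>
     1 \<le> d \<and>
     (\<forall>i\<in>{1..n}. \<forall>j\<in>{1..n}. anc 0 i = anc 0 j) \<and>
     (\<forall>i\<in>{1..n}. anc d i = i) \<and>
     (\<forall>h<d. \<forall>i\<in>{1..n}. \<forall>j\<in>{1..n}. anc (Suc h) i = anc (Suc h) j \<longrightarrow> anc h i = anc h j)"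

definition nl_leaves :: "nat \<Rightarrow> (nat \<Rightarrow> nat \<Rightarrow> nat) \<Rightarrow> nat \<Rightarrow> nat \<Rightarrow> nat set" where
  "nl_leaves n anc h x = {i \<in> {1..n}. anc h i = x}"

definition nl_children :: "nat \<Rightarrow> (nat \<Rightarrow> nat \<Rightarrow> nat) \<Rightarrow> nat \<Rightarrow> nat \<Rightarrow> nat set" where
  "nl_children n anc h x = anc (Suc h) ` nl_leaves n anc h x"

text \<open>Node values v_N(S), computed bottom-up; the argument k is d minus the depth.\<close>
primrec nl_vup :: "nat \<Rightarrow> nat \<Rightarrow> (nat \<Rightarrow> nat \<Rightarrow> nat) \<Rightarrow> (nat \<Rightarrow> real) \<Rightarrow> (nat \<Rightarrow> nat \<Rightarrow> real)
    \<Rightarrow> nat set \<Rightarrow> nat \<Rightarrow> nat \<Rightarrow> real" where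
  "nl_vup n d anc v lam S 0 x = (\<Sum>i\<in>nl_leaves n anc d x \<inter> S. v i)"
| "nl_vup n d anc v lam S (Suc k) x =
     (\<Sum>K\<in>nl_children n anc (d - Suc k) x. nl_vup n d anc v lam S k K) powr lam (d - Suc k) x"

definition nl_v :: "nat \<Rightarrow> nat \<Rightarrow> (nat \<Rightarrow> nat \<Rightarrow> nat) \<Rightarrow> (nat \<Rightarrow> real) \<Rightarrow> (nat \<Rightarrow> nat \<Rightarrow> real)
    \<Rightarrow> nat set \<Rightarrow> nat \<Rightarrow> nat \<Rightarrow> real" where
  "nl_v n d anc v lam S h x = nl_vup n d anc v lam S (d - h) x"

definition nl_csum :: "nat \<Rightarrow> nat \<Rightarrow> (nat \<Rightarrow> nat \<Rightarrow> nat) \<Rightarrow> (nat \<Rightarrow> real) \<Rightarrow> (nat \<Rightarrow> nat \<Rightarrow> real)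
    \<Rightarrow> nat set \<Rightarrow> nat \<Rightarrow> nat \<Rightarrow> real" where
  "nl_csum n d anc v lam S h x = (\<Sum>K\<in>nl_children n anc h x. nl_v n d anc v lam S (Suc h) K)"

definition nl_phi :: "nat \<Rightarrow> nat \<Rightarrow> (nat \<Rightarrow> nat \<Rightarrow> nat) \<Rightarrow> (nat \<Rightarrow> real) \<Rightarrow> (nat \<Rightarrow> nat \<Rightarrow> real)
    \<Rightarrow> nat \<Rightarrow> nat set \<Rightarrow> real" where
  "nl_phi n d anc v lam i S =
     (\<Prod>h<d. nl_v n d anc v lam S (Suc h) (anc (Suc h) i) / nl_csum n d anc v lam S h (anc h i))"

definition nl_PN :: "nat \<Rightarrow> nat \<Rightarrow> (nat \<Rightarrow> nat \<Rightarrow> nat) \<Rightarrow> (nat \<Rightarrow> real) \<Rightarrow> (nat \<Rightarrow> nat \<Rightarrow> real)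
    \<Rightarrow> nat set \<Rightarrow> nat \<Rightarrow> nat \<Rightarrow> real" where
  "nl_PN n d anc v lam S h x = (\<Sum>i\<in>nl_leaves n anc h x \<inter> S. nl_phi n d anc v lam i S)"

definition nl_BF :: "nat \<Rightarrow> nat \<Rightarrow> (nat \<Rightarrow> nat \<Rightarrow> nat) \<Rightarrow> (nat \<Rightarrow> real) \<Rightarrow> (nat \<Rightarrow> nat \<Rightarrow> real)
    \<Rightarrow> nat \<Rightarrow> nat set \<Rightarrow> real" where
  "nl_BF n d anc v lam i S = nl_phi n d anc v lam i S / nl_phi n d anc v lam i {1..n}"

text \<open>sigma i is the base-b word of item i (a list of length L); coordinate
  sigma_l(i) = sigma i ! (l - 1) for l in 1..L.\<close>
definition nl_design :: "nat \<Rightarrow> nat \<Rightarrow> nat \<Rightarrow> (nat \<Rightarrow> nat list) \<Rightarrow> nat set set" where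
  "nl_design n b L \<sigma> =
     {{i \<in> {1..n}. \<sigma> i ! (l - 1) \<noteq> dd} | l dd. l \<in> {1..L} \<and> dd < b}"

definition nl_ratio :: "nat \<Rightarrow> nat \<Rightarrow> (nat \<Rightarrow> nat \<Rightarrow> nat) \<Rightarrow> (nat \<Rightarrow> real) \<Rightarrow> (nat \<Rightarrow> nat \<Rightarrow> real)
    \<Rightarrow> nat set \<Rightarrow> nat \<Rightarrow> nat \<Rightarrow> real" where
  "nl_ratio n d anc v lam S h x =
     nl_PN n d anc v lam S h x / nl_PN n d anc v lam {1..n} h x *
     (nl_csum n d anc v lam {1..n} h x / nl_csum n d anc v lam S h x)"

definition nl_general_position :: "nat \<Rightarrow> nat \<Rightarrow> (nat \<Rightarrow> nat \<Rightarrow> nat) \<Rightarrow> (nat \<Rightarrow> real)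
    \<Rightarrow> (nat \<Rightarrow> nat \<Rightarrow> real) \<Rightarrow> nat set set \<Rightarrow> bool" where
  "nl_general_position n d anc v lam \<S> \<longleftrightarrow>
     (\<forall>S\<in>\<S>. \<forall>h x h' x'.
        h < d \<longrightarrow> h' < d \<longrightarrow> x \<in> anc h ` {1..n} \<longrightarrow> x' \<in> anc h' ` {1..n} \<longrightarrow>
        (h, x) \<noteq> (h', x') \<longrightarrow>
        nl_leaves n anc h x \<inter> S \<noteq> {} \<longrightarrow> nl_leaves n anc h' x' \<inter> S \<noteq> {} \<longrightarrow>
        (nl_leaves n anc h x \<inter> S \<subset> nl_leaves n anc h x \<or>
         nl_leaves n anc h' x' \<inter> S \<subset> nl_leaves n anc h' x') \<longrightarrow>
        nl_ratio n d anc v lam S h x \<noteq> nl_ratio n d anc v lam S h' x')"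

end

theory Submission
  imports Defs
begin


lemma anc_eq_down:
  assumes tree: "nl_tree n (Suc d') anc" and m: "m \<in> {1..n}" and l: "l \<in> {1..n}"
    and eq: "anc d' m = anc d' l"
  shows "h \<le> d' \<Longrightarrow> anc h m = anc h l"
proof (induction "d' - h" arbitrary: h)
  case 0
  then have "h = d'" by simp
  then show ?case using eq by simp
next
  case (Suc k)
  then have "anc (Suc h) m = anc (Suc h) l" by simp
  moreover have "h < Suc d'" using Suc by simp
  ultimately show ?case using tree m l unfolding nl_tree_def by blast
qed

lemma leaves_d:
  assumes tree: "nl_tree n d anc" and y: "y \<in> {1..n}"
  shows "nl_leaves n anc d y = {y}"
proof -
  have A: "\<forall>i\<in>{1..n}. anc d i = i" using tree unfolding nl_tree_def by blast
  show ?thesis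
  proof (rule set_eqI)
    fix k show "k \<in> nl_leaves n anc d y \<longleftrightarrow> k \<in> {y}"
      unfolding nl_leaves_def using A y by auto
  qed
qed

lemma v_leaf:
  assumes tree: "nl_tree n d anc" and y: "y \<in> {1..n}"
  shows "nl_v n d anc v lam T d y = (if y \<in> T then v y else 0)"
  using leaves_d[OF tree y] unfolding nl_v_def by auto

lemma children_last:
  assumes tree: "nl_tree n (Suc d') anc"
  shows "nl_children n anc d' x = nl_leaves n anc d' x"
proof -
  have A: "\<forall>i\<in>{1..n}. anc (Suc d') i = i" using tree unfolding nl_tree_def by blast
  have "\<And>i. i \<in> nl_leaves n anc d' x \<Longrightarrow> anc (Suc d') i = i"
    using A unfolding nl_leaves_def by blast
  then show ?thesis unfolding nl_children_def by (simp add: image_cong)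
qed

lemma csum_last:
  assumes tree: "nl_tree n (Suc d') anc"
  shows "nl_csum n (Suc d') anc v lam T d' x = (\<Sum>m\<in>nl_leaves n anc d' x \<inter> T. v m)"
proof -
  have fin: "finite (nl_leaves n anc d' x)" unfolding nl_leaves_def by simp
  have "nl_csum n (Suc d') anc v lam T d' x
      = (\<Sum>K\<in>nl_leaves n anc d' x. if K \<in> T then v K else 0)"
    unfolding nl_csum_def children_last[OF tree]
    apply (rule sum.cong, simp)
    apply (rule v_leaf[OF tree])
    by (auto simp: nl_leaves_def)
  also have "\<dots> = (\<Sum>m\<in>nl_leaves n anc d' x \<inter> T. v m)"
    using fin by (simp add: sum.inter_restrict)
  finally show ?thesis .
qed

definition U where
  "U n d' anc v lam T l = (\<Prod>h<d'. nl_v n (Suc d') anc v lam T (Suc h) (anc (Suc h) l)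
        / nl_csum n (Suc d') anc v lam T h (anc h l))"

lemma phi_split:
  assumes tree: "nl_tree n (Suc d') anc" and l: "l \<in> {1..n}" and lT: "l \<in> T"
  shows "nl_phi n (Suc d') anc v lam l T = U n d' anc v lam T l * (v l / nl_csum n (Suc d') anc v lam T d' (anc d' l))"
proof -
  have "anc (Suc d') l = l" using tree l unfolding nl_tree_def by blast
  then show ?thesis unfolding nl_phi_def U_def
    using v_leaf[OF tree l, of v lam T] lT by simp
qed

lemma U_same:
  assumes tree: "nl_tree n (Suc d') anc" and m: "m \<in> {1..n}" and l: "l \<in> {1..n}"
    and eq: "anc d' m = anc d' l"
  shows "U n d' anc v lam T m = U n d' anc v lam T l"
  unfolding U_def
  apply (rule prod.cong, simp)
  using anc_eq_down[OF tree m l eq] by simp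

lemma PN_last:
  assumes tree: "nl_tree n (Suc d') anc" and l: "l \<in> {1..n}" and lT: "l \<in> T"
    and vpos: "\<forall>k\<in>{1..n}. v k > 0"
  shows "nl_PN n (Suc d') anc v lam T d' (anc d' l) = U n d' anc v lam T l"
proof -
  let ?L = "nl_leaves n anc d' (anc d' l) \<inter> T"
  let ?c = "nl_csum n (Suc d') anc v lam T d' (anc d' l)"
  have fin: "finite ?L" unfolding nl_leaves_def by simp
  have c: "?c = (\<Sum>m\<in>?L. v m)" by (rule csum_last[OF tree])
  have lL: "l \<in> ?L" using l lT by (simp add: nl_leaves_def)
  have "(\<Sum>m\<in>?L. v m) > 0"
    apply (rule sum_pos2[OF fin lL])
    using vpos l apply simp
    using vpos by (auto simp: nl_leaves_def intro: less_imp_le)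
  then have cpos: "?c \<noteq> 0" using c by simp
  have "nl_PN n (Suc d') anc v lam T d' (anc d' l) = (\<Sum>m\<in>?L. U n d' anc v lam T l * (v m / ?c))"
    unfolding nl_PN_def
    apply (rule sum.cong, simp)
    subgoal for m
      using phi_split[OF tree _ , of m T v lam] U_same[OF tree _ l, of m v lam T]
      by (auto simp: nl_leaves_def)
    done
  also have "\<dots> = U n d' anc v lam T l * ((\<Sum>m\<in>?L. v m) / ?c)"
    by (simp add: sum_distrib_left sum_divide_distrib)
  also have "\<dots> = U n d' anc v lam T l" using c cpos by simp
  finally show ?thesis .
qed

lemma alg: fixes a b c e w :: real assumes "w \<noteq> 0"
  shows "(a * (w / c)) / (b * (w / e)) = a / b * (e / c)"
  using assms by (simp add: divide_simps)

lemma BF_ratio: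
  assumes tree: "nl_tree n (Suc d') anc" and l: "l \<in> {1..n}" and lS: "l \<in> S"
    and vpos: "\<forall>k\<in>{1..n}. v k > 0"
  shows "nl_BF n (Suc d') anc v lam l S = nl_ratio n (Suc d') anc v lam S d' (anc d' l)"
proof -
  have "v l > 0" using vpos l by blast
  then have vl: "v l \<noteq> 0" by simp
  have a: "nl_phi n (Suc d') anc v lam l {1..n} = U n d' anc v lam {1..n} l * (v l / nl_csum n (Suc d') anc v lam {1..n} d' (anc d' l))"
    by (rule phi_split[OF tree l l])
  have b: "nl_PN n (Suc d') anc v lam {1..n} d' (anc d' l) = U n d' anc v lam {1..n} l"
    by (rule PN_last[OF tree l l vpos])
  show ?thesis
    unfolding nl_BF_def nl_ratio_def a b
      phi_split[OF tree l lS] PN_last[OF tree l lS vpos]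
    by (rule alg[OF vl])
qed


theorem propositionD1:
  fixes n d b :: nat and anc :: "nat \<Rightarrow> nat \<Rightarrow> nat" and v :: "nat \<Rightarrow> real"
    and lam :: "nat \<Rightarrow> nat \<Rightarrow> real" and \<sigma> :: "nat \<Rightarrow> nat list"
    and S :: "nat set" and i j :: nat
  assumes n2: "2 \<le> n"
    and tree: "nl_tree n d anc"
    and vpos: "\<forall>k\<in>{1..n}. v k > 0"
    and lam_range: "\<forall>h<d. \<forall>x\<in>anc h ` {1..n}. 0 < lam h x \<and> lam h x \<le> 1"
    and b2: "2 \<le> b"
    and sigma_len: "\<forall>k\<in>{1..n}. length (\<sigma> k) = nat \<lceil>log (real b) (real n)\<rceil>"
    and sigma_digits: "\<forall>k\<in>{1..n}. \<forall>c\<in>set (\<sigma> k). c < b"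
    and sigma_inj: "inj_on \<sigma> {1..n}"
    and gp: "nl_general_position n d anc v lam (nl_design n b (nat \<lceil>log (real b) (real n)\<rceil>) \<sigma>)"
    and S_in: "S \<in> nl_design n b (nat \<lceil>log (real b) (real n)\<rceil>) \<sigma>"
    and i_in: "i \<in> S" and j_in: "j \<in> S"
  shows "(anc d j \<in> nl_children n anc (d - 1) (anc (d - 1) i) \<longrightarrow>
            nl_BF n d anc v lam i S = nl_BF n d anc v lam j S)
       \<and> (anc d j \<notin> nl_children n anc (d - 1) (anc (d - 1) i) \<and>
            (\<exists>k\<in>{1..n}. anc d k \<in> nl_children n anc (d - 1) (anc (d - 1) i) \<and> k \<notin> S) \<longrightarrow>
            nl_BF n d anc v lam i S \<noteq> nl_BF n d anc v lam j S)"
  proof -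
  have d1: "1 \<le> d" using tree unfolding nl_tree_def by blast
  obtain d' where dd: "d = Suc d'" using d1 by (cases d) auto
  have tree': "nl_tree n (Suc d') anc" using tree dd by simp
  have Ssub: "S \<subseteq> {1..n}" using S_in unfolding nl_design_def by auto
  have iN: "i \<in> {1..n}" and jN: "j \<in> {1..n}" using Ssub i_in j_in by auto
  have BFi: "nl_BF n d anc v lam i S = nl_ratio n d anc v lam S d' (anc d' i)"
    unfolding dd by (rule BF_ratio[OF tree' iN i_in vpos])
  have BFj: "nl_BF n d anc v lam j S = nl_ratio n d anc v lam S d' (anc d' j)"
    unfolding dd by (rule BF_ratio[OF tree' jN j_in vpos])
  have ancd: "\<And>k. k \<in> {1..n} \<Longrightarrow> anc d k = k" using tree unfolding nl_tree_def by blast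
  have ch: "nl_children n anc (d - 1) x = nl_leaves n anc d' x" for x
    using children_last[OF tree'] dd by simp
  have chj: "anc d j \<in> nl_children n anc (d - 1) (anc (d - 1) i) \<longleftrightarrow> anc d' j = anc d' i"
    unfolding ch using ancd[OF jN] jN dd by (auto simp: nl_leaves_def)
  show ?thesis
  proof (intro conjI impI)
    assume "anc d j \<in> nl_children n anc (d - 1) (anc (d - 1) i)"
    then have "anc d' j = anc d' i" using chj by simp
    then show "nl_BF n d anc v lam i S = nl_BF n d anc v lam j S" using BFi BFj by simp
  next
    assume as: "anc d j \<notin> nl_children n anc (d - 1) (anc (d - 1) i) \<and>
            (\<exists>k\<in>{1..n}. anc d k \<in> nl_children n anc (d - 1) (anc (d - 1) i) \<and> k \<notin> S)"
    then have ne: "anc d' j \<noteq> anc d' i" using chj by simp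
    from as obtain k where kN: "k \<in> {1..n}" and kc: "anc d k \<in> nl_children n anc (d - 1) (anc (d - 1) i)"
      and kS: "k \<notin> S" by blast
    have kL: "k \<in> nl_leaves n anc d' (anc d' i)" using kc unfolding ch using ancd[OF kN] dd by simp
    have strict: "nl_leaves n anc d' (anc d' i) \<inter> S \<subset> nl_leaves n anc d' (anc d' i)"
      using kL kS by blast
    have iL: "i \<in> nl_leaves n anc d' (anc d' i) \<inter> S" using iN i_in by (simp add: nl_leaves_def)
    have jL: "j \<in> nl_leaves n anc d' (anc d' j) \<inter> S" using jN j_in by (simp add: nl_leaves_def)
    have "nl_ratio n d anc v lam S d' (anc d' i) \<noteq> nl_ratio n d anc v lam S d' (anc d' j)"
      apply (rule gp[unfolded nl_general_position_def, rule_format, OF S_in])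
      using dd apply simp
      using dd apply simp
      using iN apply blast
      using jN apply blast
      using ne apply simp
      using iL apply blast
      using jL apply blast
      using strict by blast
    then show "nl_BF n d anc v lam i S \<noteq> nl_BF n d anc v lam j S" using BFi BFj by simp
  qed
qed

end
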